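(* Let $G$ be a group with a finite generating set $S$ not containing the identity $e$, and let $d_W$ and $d_C$ be the word metric and the cardinal metric on $G$ with respect to $S$. Then every isometry $T\colon (G,d_C)\to(G,d_W)$ is of the form $T=L_a\circ\tilde T$, where $a\in G$, $L_a\colon g\mapsto ag$, and $\tilde T\colon(G,d_C)\to(G,d_W)$ is an isometry with $\tilde T(e)=e$ and $\tilde T(S)\subseteq S\cup S^{-1}$. Furthermore, $\tilde T$ is a nonexpansive map on $(G,d_W)$, i.e. $d_W(\tilde T(g),\tilde T(h))\le d_W(g,h)$ for all $g,h\in G$.
   Context: The word metric: $d_W(g,g)=0$ and for $g\ne h$, $d_W(g,h)$ is the least $n\in\mathbb{N}$ such that $g^{-1}h=s_1^{\epsilon_1}\cdots s_n^{\epsilon_n}$ with $s_i\in S$, $\epsilon_i\in\{\pm1\}$. The cardinal norm is $\|g\| = \min\{|A| : A\subseteq S,\ g\in\langle A\rangle\}$, where $\langle A\rangle$ is the subgroup generated by $A$, and $d_C(g,h)=\|g^{-1}h\|$. An isometry here means a distance-preserving map $T$, i.e. $d_W(T(g),T(h))=d_C(g,h)$ for all $g,h$. *)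

theory Defs
  imports "HOL-Algebra.Generated_Groups"
begin

fun word_eval :: "('a, 'b) monoid_scheme \<Rightarrow> ('a \<times> bool) list \<Rightarrow> 'a" where
  "word_eval G [] = \<one>\<^bsub>G\<^esub>"
| "word_eval G ((s, e) # w) =
     (if e then s else inv\<^bsub>G\<^esub> s) \<otimes>\<^bsub>G\<^esub> word_eval G w"

definition word_dist :: "('a, 'b) monoid_scheme \<Rightarrow> 'a set \<Rightarrow> 'a \<Rightarrow> 'a \<Rightarrow> nat" where
  "word_dist G S g h =
     (LEAST n. \<exists>w. length w = n \<and> fst ` set w \<subseteq> S \<and>
                   word_eval G w = inv\<^bsub>G\<^esub> g \<otimes>\<^bsub>G\<^esub> h)"

definition cardinal_norm :: "('a, 'b) monoid_scheme \<Rightarrow> 'a set \<Rightarrow> 'a \<Rightarrow> nat" where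
  "cardinal_norm G S g = (LEAST n. \<exists>A. A \<subseteq> S \<and> card A = n \<and> g \<in> generate G A)"

definition cardinal_dist :: "('a, 'b) monoid_scheme \<Rightarrow> 'a set \<Rightarrow> 'a \<Rightarrow> 'a \<Rightarrow> nat" where
  "cardinal_dist G S g h = cardinal_norm G S (inv\<^bsub>G\<^esub> g \<otimes>\<^bsub>G\<^esub> h)"

definition CW_isometry :: "('a, 'b) monoid_scheme \<Rightarrow> 'a set \<Rightarrow> ('a \<Rightarrow> 'a) \<Rightarrow> bool" where
  "CW_isometry G S T \<longleftrightarrow> T \<in> carrier G \<rightarrow> carrier G \<and>
     (\<forall>g\<in>carrier G. \<forall>h\<in>carrier G. word_dist G S (T g) (T h) = cardinal_dist G S g h)"

end

theory Submission
  imports Defs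
begin

lemma word_eval_closed:
  assumes "group G" "fst ` set w \<subseteq> carrier G"
  shows "word_eval G w \<in> carrier G"
  using assms(2)
proof (induction w)
  case Nil thus ?case using assms(1) by (simp add: group.is_monoid monoid.one_closed)
next
  case (Cons a w)
  obtain s e where a: "a = (s, e)" by (cases a)
  with Cons show ?case using assms(1) by (auto simp: group.is_monoid monoid.m_closed group.inv_closed)
qed

lemma word_eval_append:
  assumes "group G" "fst ` set w1 \<subseteq> carrier G" "fst ` set w2 \<subseteq> carrier G"
  shows "word_eval G (w1 @ w2) = word_eval G w1 \<otimes>\<^bsub>G\<^esub> word_eval G w2"
  using assms(2)
proof (induction w1)
  case Nil
  have "word_eval G w2 \<in> carrier G" using assms word_eval_closed by blast
  thus ?case using assms(1) by (simp add: group.is_monoid monoid.l_one)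
next
  case (Cons a w)
  obtain s e where a: "a = (s, e)" by (cases a)
  have c1: "word_eval G w \<in> carrier G" "word_eval G w2 \<in> carrier G"
    using Cons assms word_eval_closed by auto
  have "s \<in> carrier G" using Cons a by auto
  with Cons a c1 show ?case using assms(1)
    by (auto simp: group.is_monoid monoid.m_assoc group.inv_closed)
qed

lemma word_exists:
  assumes "group G" "S \<subseteq> carrier G" "x \<in> generate G S"
  shows "\<exists>w. fst ` set w \<subseteq> S \<and> word_eval G w = x"
  using assms(3)
proof (induction rule: generate.induct)
  case one
  show ?case by (rule exI[of _ "[]"]) simp
next
  case (incl h)
  then show ?case using assms
    by (intro exI[of _ "[(h,True)]"]) (auto simp: group.is_monoid monoid.r_one)
next
  case (inv h)
  then show ?case using assms
    by (intro exI[of _ "[(h,False)]"]) (auto simp: group.is_monoid monoid.r_one group.inv_closed)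
next
  case (eng h1 h2)
  then obtain w1 w2 where "fst ` set w1 \<subseteq> S" "word_eval G w1 = h1"
    "fst ` set w2 \<subseteq> S" "word_eval G w2 = h2" by blast
  then show ?case using assms word_eval_append[of G w1 w2]
    by (intro exI[of _ "w1 @ w2"]) auto
qed

lemma word_in_generate:
  assumes "group G" "A \<subseteq> carrier G" "fst ` set w \<subseteq> A"
  shows "word_eval G w \<in> generate G A"
  using assms(3)
proof (induction w)
  case Nil thus ?case by (simp add: generate.one)
next
  case (Cons a w)
  obtain s e where a: "a = (s, e)" by (cases a)
  with Cons show ?case by (auto intro: generate.eng generate.incl generate.inv)
qed

lemma word_dist_ex:
  assumes "group G" "S \<subseteq> carrier G" "generate G S = carrier G"
    "g \<in> carrier G" "h \<in> carrier G"
  shows "\<exists>w. length w = word_dist G S g h \<and> fst ` set w \<subseteq> S \<and>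
                   word_eval G w = inv\<^bsub>G\<^esub> g \<otimes>\<^bsub>G\<^esub> h"
proof -
  have "inv\<^bsub>G\<^esub> g \<otimes>\<^bsub>G\<^esub> h \<in> carrier G" using assms
    by (simp add: group.is_monoid monoid.m_closed group.inv_closed)
  then obtain w where "fst ` set w \<subseteq> S" "word_eval G w = inv\<^bsub>G\<^esub> g \<otimes>\<^bsub>G\<^esub> h"
    using word_exists[OF assms(1,2)] assms(3) by blast
  then have "\<exists>n w. length w = n \<and> fst ` set w \<subseteq> S \<and>
                   word_eval G w = inv\<^bsub>G\<^esub> g \<otimes>\<^bsub>G\<^esub> h" by blast
  then show ?thesis unfolding word_dist_def by (rule LeastI_ex)
qed

lemma cardinal_le_word:
  assumes "group G" "S \<subseteq> carrier G" "generate G S = carrier G"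
    "g \<in> carrier G" "h \<in> carrier G"
  shows "cardinal_dist G S g h \<le> word_dist G S g h"
proof -
  obtain w where w: "length w = word_dist G S g h" "fst ` set w \<subseteq> S"
    "word_eval G w = inv\<^bsub>G\<^esub> g \<otimes>\<^bsub>G\<^esub> h"
    using word_dist_ex[OF assms] by blast
  have "inv\<^bsub>G\<^esub> g \<otimes>\<^bsub>G\<^esub> h \<in> generate G (fst ` set w)"
    using word_in_generate[OF assms(1), of "fst ` set w" w] w assms(2) by auto
  then have "cardinal_norm G S (inv\<^bsub>G\<^esub> g \<otimes>\<^bsub>G\<^esub> h) \<le> card (fst ` set w)"
    unfolding cardinal_norm_def using w(2) by (intro Least_le) blast
  also have "\<dots> \<le> length w"
    by (metis List.finite_set card_image_le card_length order_trans)
  finally show ?thesis unfolding cardinal_dist_def using w(1) by simp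
qed

lemma cardinal_norm_gen:
  assumes "group G" "S \<subseteq> carrier G" "finite S" "\<one>\<^bsub>G\<^esub> \<notin> S" "s \<in> S"
  shows "cardinal_norm G S s = 1"
proof -
  have le: "cardinal_norm G S s \<le> 1"
    unfolding cardinal_norm_def using assms(5)
    by (intro Least_le exI[of _ "{s}"]) (auto intro: generate.incl)
  have "cardinal_norm G S s \<noteq> 0"
  proof
    assume z: "cardinal_norm G S s = 0"
    have "\<exists>n A. A \<subseteq> S \<and> card A = n \<and> s \<in> generate G A"
      using assms(5) by (blast intro: generate.incl)
    then have "\<exists>A. A \<subseteq> S \<and> card A = cardinal_norm G S s \<and> s \<in> generate G A"
      unfolding cardinal_norm_def by (rule LeastI_ex)
    then obtain A where "A \<subseteq> S" "card A = 0" "s \<in> generate G A" using z by auto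
    then have "A = {}" using assms(3) finite_subset[of A S] by auto
    then show False using \<open>s \<in> generate G A\<close> group.generate_empty[OF assms(1)] assms(4,5) by auto
  qed
  with le show ?thesis by simp
qed

context group begin
lemma inv_shift_aux: assumes a: "a \<in> carrier G" and g: "x \<in> carrier G" and h: "y \<in> carrier G"
  shows "inv (inv a \<otimes> x) \<otimes> (inv a \<otimes> y) = inv x \<otimes> y"
proof -
  have "a \<otimes> (inv a \<otimes> y) = (a \<otimes> inv a) \<otimes> y"
    using a h by (intro m_assoc[symmetric]) auto
  then have e1: "a \<otimes> (inv a \<otimes> y) = y" using a h by simp
  have "inv (inv a \<otimes> x) = inv x \<otimes> a" using a g by (simp add: inv_mult_group)
  then have "inv (inv a \<otimes> x) \<otimes> (inv a \<otimes> y) = inv x \<otimes> (a \<otimes> (inv a \<otimes> y))"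
    using a g h by (simp add: m_assoc)
  then show ?thesis using e1 by simp
qed

lemma cancel_aux: assumes "a \<in> carrier G" "y \<in> carrier G"
  shows "a \<otimes> (inv a \<otimes> y) = y"
proof -
  have "a \<otimes> (inv a \<otimes> y) = (a \<otimes> inv a) \<otimes> y"
    using assms by (intro m_assoc[symmetric]) auto
  then show ?thesis using assms by simp
qed
end

theorem mainTheorem8:
  fixes G (structure) and S :: "'a set" and T :: "'a \<Rightarrow> 'a"
  assumes "group G"
    and "S \<subseteq> carrier G" and "finite S" and "\<one> \<notin> S"
    and "generate G S = carrier G"
    and "CW_isometry G S T"
  shows "\<exists>a\<in>carrier G. \<exists>T'. CW_isometry G S T' \<and> T' \<one> = \<one> \<and>
           T' ` S \<subseteq> S \<union> (\<lambda>s. inv s) ` S \<and>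
           (\<forall>g\<in>carrier G. T g = a \<otimes> T' g) \<and>
           (\<forall>g\<in>carrier G. \<forall>h\<in>carrier G. word_dist G S (T' g) (T' h) \<le> word_dist G S g h)"
proof -
  interpret group G by fact
  have Tc: "T \<in> carrier G \<rightarrow> carrier G" and Td: "\<And>g h. g \<in> carrier G \<Longrightarrow> h \<in> carrier G \<Longrightarrow>
     word_dist G S (T g) (T h) = cardinal_dist G S g h"
    using assms(6) unfolding CW_isometry_def by auto
  define a where "a = T \<one>"
  have a: "a \<in> carrier G" using Tc a_def by auto
  define T' where "T' = (\<lambda>g. inv a \<otimes> T g)"
  have T'c: "T' \<in> carrier G \<rightarrow> carrier G" using Tc a unfolding T'_def by auto
  have inveq: "inv (T' g) \<otimes> T' h = inv (T g) \<otimes> T h" if "g \<in> carrier G" "h \<in> carrier G" for g h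
  proof -
    have "T g \<in> carrier G" "T h \<in> carrier G" using Tc that by auto
    then show ?thesis unfolding T'_def by (rule inv_shift_aux[OF a])
  qed
  have T'd: "word_dist G S (T' g) (T' h) = cardinal_dist G S g h"
    if "g \<in> carrier G" "h \<in> carrier G" for g h
    using Td[OF that] inveq[OF that] unfolding word_dist_def by simp
  have iso: "CW_isometry G S T'" unfolding CW_isometry_def using T'c T'd by auto
  have one: "T' \<one> = \<one>" unfolding T'_def a_def using a a_def by simp
  have sub: "T' ` S \<subseteq> S \<union> (\<lambda>s. inv s) ` S"
  proof
    fix y assume "y \<in> T' ` S"
    then obtain s where s: "s \<in> S" "y = T' s" by auto
    have sc: "s \<in> carrier G" using s assms(2) by auto
    have yc: "y \<in> carrier G" using T'c sc s by auto
    have "word_dist G S (T' \<one>) (T' s) = 1"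
      using T'd[of \<one> s] sc cardinal_norm_gen[OF assms(1-4) s(1)]
      unfolding cardinal_dist_def by simp
    then have d1: "word_dist G S \<one> y = 1" using one s by simp
    obtain w where w: "length w = 1" "fst ` set w \<subseteq> S" "word_eval G w = inv \<one> \<otimes> y"
      using word_dist_ex[OF assms(1,2,5) one_closed yc] d1 by auto
    then obtain x e where "w = [(x,e)]"
    proof (cases w)
      case (Cons p r)
      then show ?thesis using that w(1) by (cases p) auto
    qed (use w(1) in auto)
    with w yc assms(2) show "y \<in> S \<union> (\<lambda>s. inv s) ` S"
      by (auto split: if_splits)
  qed
  have fac: "\<forall>g\<in>carrier G. T g = a \<otimes> T' g"
    unfolding T'_def using Tc a cancel_aux by (simp add: Pi_iff)
  have ne: "\<forall>g\<in>carrier G. \<forall>h\<in>carrier G. word_dist G S (T' g) (T' h) \<le> word_dist G S g h"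
    using T'd cardinal_le_word[OF assms(1,2,5)] by simp
  show ?thesis using a iso one sub fac ne by blast
qed

end
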